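(* Let $X$ be a flag simplicial complex triangulating $S^5$. Assume $X$ has an edge $\eta$ whose link $\mathrm{Lk}_\eta$ is a cross-polytope, and that $h_X(-1)<0$ (equivalently, the coefficient of $t^3$ in $\gamma_X$ is positive). Then for every sufficiently large natural number $m$, the h-polynomial of the $m$-fold subdivision $\mathrm{Sub}^m_\eta(X)$ has a non-real root.
   Context: Simplicial complexes contain the empty face; $\#\sigma$ is the number of vertices of $\sigma$. Link: $\mathrm{Lk}_\sigma=\{\tau\in X:\sigma\cup\tau\in X,\ \sigma\cap\tau=\emptyset\}$. Flag: every set of pairwise adjacent vertices is a face. The join of complexes $X,Y$ on disjoint vertex sets is $\{\sigma\cup\tau:\sigma\in X,\tau\in Y\}$; the $k$-dimensional cross-polytope is the $(k+1)$-fold join of the complex consisting of two vertices and no edge. f-polynomial: $f_X(t)=\sum_{\sigma\in X}t^{\#\sigma}$; for $X$ a triangulation of $S^{n-1}$, $h_X$ is defined by $(1+t)^n h_X(\frac1{1+t})=t^nf_X(\frac1t)$, and $\gamma_X$ is the unique polynomial with $h_X(t)=(1+t)^{n}\gamma_X\!\left(\frac{t}{(1+t)^2}\right)$. Edge subdivision: for an edge $\eta=\{s,t\}$ of $X$ and a new vertex $e$, $\mathrm{Sub}_\eta(X)=\{\sigma:\eta\not\subset\sigma\in X\}\cup\{\sigma\cup\{e\},\sigma\cup\{s,e\},\sigma\cup\{t,e\}:\sigma\in\mathrm{Lk}_\eta\}$. The $m$-fold subdivision $\mathrm{Sub}^m_\eta(X)$ is obtained by $m$ successive edge subdivisions, the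 first along $\eta$ and each subsequent one along an edge joining the most recently added vertex to an endpoint of the previously subdivided edge (such an edge has link equal to $\mathrm{Lk}_\eta$). *)

theory Defs
  imports "HOL-Analysis.Analysis" "HOL-Computational_Algebra.Polynomial"
begin

definition simplicial_complex :: "'a set set \<Rightarrow> bool" where
  "simplicial_complex K \<longleftrightarrow> finite K \<and> {} \<in> K \<and> (\<forall>\<sigma>\<in>K. finite \<sigma>)
     \<and> (\<forall>\<sigma>\<in>K. \<forall>\<tau>. \<tau> \<subseteq> \<sigma> \<longrightarrow> \<tau> \<in> K)"

definition vertices :: "'a set set \<Rightarrow> 'a set" where
  "vertices K = \<Union>K"

definition link :: "'a set set \<Rightarrow> 'a set \<Rightarrow> 'a set set" where
  "link K \<sigma> = {\<tau> \<in> K. \<sigma> \<union> \<tau> \<in> K \<and> \<sigma> \<inter> \<tau> = {}}"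

definition flag :: "'a set set \<Rightarrow> bool" where
  "flag K \<longleftrightarrow> (\<forall>S. S \<subseteq> vertices K \<and> (\<forall>u\<in>S. \<forall>v\<in>S. u \<noteq> v \<longrightarrow> {u, v} \<in> K) \<longrightarrow> S \<in> K)"

definition join :: "'a set set \<Rightarrow> 'a set set \<Rightarrow> 'a set set" where
  "join K L = {\<sigma> \<union> \<tau> | \<sigma> \<tau>. \<sigma> \<in> K \<and> \<tau> \<in> L}"

fun cross :: "(nat \<Rightarrow> 'a) \<Rightarrow> (nat \<Rightarrow> 'a) \<Rightarrow> nat \<Rightarrow> 'a set set" where
  "cross a b 0 = {{}}"
| "cross a b (Suc n) = join (cross a b n) {{}, {a n}, {b n}}"

definition is_cross_polytope :: "'a set set \<Rightarrow> bool" where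
  "is_cross_polytope K \<longleftrightarrow> (\<exists>n a b. n \<ge> 1 \<and> inj_on a {..<n} \<and> inj_on b {..<n}
      \<and> a ` {..<n} \<inter> b ` {..<n} = {} \<and> K = cross a b n)"

text \<open>Geometric realization of a finite simplicial complex, as a subspace of the
  product space 'a \<Rightarrow> real (barycentric coordinates supported on a face).\<close>
definition realization :: "'a set set \<Rightarrow> ('a \<Rightarrow> real) topology" where
  "realization K = subtopology (powertop_real UNIV)
     {x. (\<forall>v. 0 \<le> x v) \<and> {v. x v \<noteq> 0} \<in> K \<and> sum x {v. x v \<noteq> 0} = 1}"

definition triangulates_sphere :: "'a set set \<Rightarrow> nat \<Rightarrow> bool" where
  "triangulates_sphere K d \<longleftrightarrow> simplicial_complex K \<and> realization K homeomorphic_space nsphere d"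

definition f_poly :: "'a set set \<Rightarrow> real poly" where
  "f_poly K = (\<Sum>\<sigma>\<in>K. monom 1 (card \<sigma>))"

text \<open>h-polynomial of a triangulation of S^(n-1), i.e. the unique polynomial with
  (1+t)^n h(1/(1+t)) = t^n f(1/t); explicitly h(t) = sum over faces of t^#s (1-t)^(n-#s).\<close>
definition h_poly :: "nat \<Rightarrow> 'a set set \<Rightarrow> real poly" where
  "h_poly n K = (\<Sum>\<sigma>\<in>K. monom 1 (card \<sigma>) * [:1, -1:] ^ (n - card \<sigma>))"

definition edge_sub :: "'a set \<Rightarrow> 'a \<Rightarrow> 'a set set \<Rightarrow> 'a set set" where
  "edge_sub \<eta> e K = {\<sigma> \<in> K. \<not> \<eta> \<subseteq> \<sigma>}
     \<union> {\<sigma> \<union> \<rho> | \<sigma> \<rho>. \<sigma> \<in> link K \<eta> \<and> (\<rho> = {e} \<or> (\<exists>s\<in>\<eta>. \<rho> = {s, e}))}"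

fun sub_iter :: "(nat \<Rightarrow> 'a set) \<Rightarrow> (nat \<Rightarrow> 'a) \<Rightarrow> nat \<Rightarrow> 'a set set \<Rightarrow> 'a set set" where
  "sub_iter ed e 0 K = K"
| "sub_iter ed e (Suc k) K = edge_sub (ed k) (e k) (sub_iter ed e k K)"

definition multi_sub_data :: "'a set set \<Rightarrow> 'a set \<Rightarrow> nat \<Rightarrow> (nat \<Rightarrow> 'a set) \<Rightarrow> (nat \<Rightarrow> 'a) \<Rightarrow> bool" where
  "multi_sub_data K \<eta> m ed e \<longleftrightarrow> inj_on e {..<m} \<and> e ` {..<m} \<inter> vertices K = {}
     \<and> ed 0 = \<eta> \<and> (\<forall>k. Suc k < m \<longrightarrow> (\<exists>p\<in>ed k. ed (Suc k) = {e k, p}))"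

end

theory Submission
  imports Defs "HOL-Computational_Algebra.Fundamental_Theorem_Algebra" "HOL-Homology.Invariance_of_Domain"
begin


definition Fq :: "'b::field poly \<Rightarrow> 'b" where
  "Fq P = (let q = (\<lambda>k. Polynomial.coeff P k / Polynomial.coeff P 0) in
     q 1 ^ 4 - 4 * q 1 ^ 2 * q 2 + 2 * q 2 ^ 2 + 4 * q 1 * q 3 - 4 * q 4)"

definition Fpol :: "'b::comm_ring_1 \<Rightarrow> 'b \<Rightarrow> 'b \<Rightarrow> 'b \<Rightarrow> 'b" where
  "Fpol q1 q2 q3 q4 = q1 ^ 4 - 4 * q1 ^ 2 * q2 + 2 * q2 ^ 2 + 4 * q1 * q3 - 4 * q4"

lemma Fpol_step:
  "Fpol (q1 - y) (q2 - y*q1) (q3 - y*q2) (q4 - y*q3) = Fpol q1 q2 q3 q4 + y^4"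
  unfolding Fpol_def by (simp add: power2_eq_square power4_eq_xxxx algebra_simps)

lemma Fq_Fpol: "Fq P = Fpol (Polynomial.coeff P 1 / Polynomial.coeff P 0) (Polynomial.coeff P 2 / Polynomial.coeff P 0) (Polynomial.coeff P 3 / Polynomial.coeff P 0) (Polynomial.coeff P 4 / Polynomial.coeff P 0)"
  unfolding Fq_def Fpol_def Let_def ..

lemma coeff_lin_mult:
  fixes P :: "'b::comm_ring_1 poly"
  shows "Polynomial.coeff ([:-a, 1:] * P) 0 = - a * Polynomial.coeff P 0"
  "Polynomial.coeff ([:-a, 1:] * P) (Suc k) = Polynomial.coeff P k - a * Polynomial.coeff P (Suc k)"
  by (simp_all add: mult_pCons_left)

lemma Fq_prod:
  fixes A :: "'b::field multiset"
  assumes "\<forall>a\<in>#A. a \<noteq> 0"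
  shows "Polynomial.coeff (\<Prod>a\<in>#A. [:-a, 1:]) 0 \<noteq> 0 \<and> Fq (\<Prod>a\<in>#A. [:-a, 1:]) = (\<Sum>a\<in>#A. (1/a)^4)"
  using assms
proof (induction A)
  case empty
  then show ?case by (simp add: Fq_def)
next
  case (add a A)
  let ?P = "\<Prod>a\<in>#A. [:-a, 1:]"
  from add have a0: "a \<noteq> 0" and IH: "Polynomial.coeff ?P 0 \<noteq> 0" "Fq ?P = (\<Sum>a\<in>#A. (1/a)^4)" by auto
  have eq: "(\<Prod>a\<in>#add_mset a A. [:-a, 1:]) = [:-a,1:] * ?P" by simp
  have c0: "Polynomial.coeff ([:-a,1:] * ?P) 0 \<noteq> 0" using a0 IH by (simp add: coeff_lin_mult)
  have "Fq ([:-a,1:] * ?P) = Fq ?P + (1/a)^4"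
  proof -
    have e: "\<And>k. Polynomial.coeff ([:-a,1:] * ?P) (Suc k) / Polynomial.coeff ([:-a,1:] * ?P) 0
       = Polynomial.coeff ?P (Suc k) / Polynomial.coeff ?P 0 - (1/a) * (Polynomial.coeff ?P k / Polynomial.coeff ?P 0)"
      using a0 IH(1) by (simp add: coeff_lin_mult field_simps)
    have e1: "Polynomial.coeff ([:-a,1:] * ?P) 1 / Polynomial.coeff ([:-a,1:] * ?P) 0 = Polynomial.coeff ?P 1 / Polynomial.coeff ?P 0 - (1/a)"
      using e[of 0] IH(1) by simp
    have e2: "Polynomial.coeff ([:-a,1:] * ?P) 2 / Polynomial.coeff ([:-a,1:] * ?P) 0 = Polynomial.coeff ?P 2 / Polynomial.coeff ?P 0 - (1/a) * (Polynomial.coeff ?P 1 / Polynomial.coeff ?P 0)"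
      using e[of 1] by (simp add: numeral_2_eq_2)
    have e3: "Polynomial.coeff ([:-a,1:] * ?P) 3 / Polynomial.coeff ([:-a,1:] * ?P) 0 = Polynomial.coeff ?P 3 / Polynomial.coeff ?P 0 - (1/a) * (Polynomial.coeff ?P 2 / Polynomial.coeff ?P 0)"
      using e[of 2] by (simp add: numeral_3_eq_3 numeral_2_eq_2)
    have e4: "Polynomial.coeff ([:-a,1:] * ?P) 4 / Polynomial.coeff ([:-a,1:] * ?P) 0 = Polynomial.coeff ?P 4 / Polynomial.coeff ?P 0 - (1/a) * (Polynomial.coeff ?P 3 / Polynomial.coeff ?P 0)"
      using e[of 3] by (simp add: numeral_3_eq_3 numeral_Bit0 numeral_eq_Suc)
    show ?thesis unfolding Fq_Fpol e1 e2 e3 e4 Fpol_step ..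
  qed
  then show ?case using c0 IH by (simp add: eq add.commute)
qed


lemma mpr_add: "map_poly complex_of_real (p + q) = map_poly of_real p + map_poly of_real q"
  by (rule poly_eqI) (simp add: coeff_map_poly)

lemma mpr_mult: "map_poly complex_of_real (p * q) = map_poly of_real p * map_poly of_real q"
  by (rule poly_eqI) (simp add: coeff_map_poly coeff_mult)

lemma mpr_pcompose:
  "map_poly complex_of_real (pcompose p q) = pcompose (map_poly of_real p) (map_poly of_real q)"
proof (induction p)
  case 0 then show ?case by simp
next
  case (pCons a p)
  then show ?case by (simp add: pcompose_pCons map_poly_pCons mpr_add mpr_mult)
qed

lemma Fq_smult: "c \<noteq> 0 \<Longrightarrow> Fq (Polynomial.smult c P) = Fq P"
  unfolding Fq_def by (simp add: Let_def)

lemma Fq_of_real: "Fq (map_poly complex_of_real P) = of_real (Fq P)"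
  unfolding Fq_def by (simp add: Let_def coeff_map_poly)

lemma sum_mset_real_nonneg:
  assumes "\<forall>a\<in>#A. a \<in> \<real>"
  shows "(\<Sum>a\<in>#A. (1/a)^4) = complex_of_real (\<Sum>a\<in>#A. (1/Re a)^4) \<and> (\<Sum>a\<in>#A. (1/Re a)^4) \<ge> 0"
  using assms
proof (induction A)
  case empty then show ?case by simp
next
  case (add x A)
  then have "x \<in> \<real>" by auto
  then have "x = of_real (Re x)" by (simp add: complex_is_Real_iff complex_eq_iff)
  then have "(1/x)^4 = of_real ((1/Re x)^4)" by (metis of_real_divide of_real_1 of_real_power)
  with add show ?case by simp
qed

lemma nonreal_root:
  fixes p :: "real poly"
  assumes p1: "poly p (-1) \<noteq> 0" and F: "Fq (pcompose p [:-1,1:]) < 0"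
  shows "\<exists>z::complex. poly (map_poly complex_of_real p) z = 0 \<and> z \<notin> \<real>"
proof (rule ccontr)
  assume H: "\<not> ?thesis"
  define Q where "Q = pcompose p [:-1,1:]"
  define Qc where "Qc = map_poly complex_of_real Q"
  have Qc_alt: "Qc = pcompose (map_poly complex_of_real p) [:-1,1:]"
    unfolding Qc_def Q_def mpr_pcompose by (simp add: map_poly_pCons)
  have c0: "Polynomial.coeff Q 0 = poly p (-1)" unfolding Q_def by (simp add: poly_0_coeff_0[symmetric] poly_pcompose)
  have Qc0: "Polynomial.coeff Qc 0 \<noteq> 0" using c0 p1 by (simp add: Qc_def coeff_map_poly)
  then have Qcnz: "Qc \<noteq> 0" by auto
  have roots_real: "\<forall>a\<in>#proots Qc. a \<in> \<real> \<and> a \<noteq> 0"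
  proof
    fix a assume "a \<in># proots Qc"
    then have "poly Qc a = 0" using Qcnz by simp
    then have r: "poly (map_poly complex_of_real p) (a - 1) = 0"
      unfolding Qc_alt by (simp add: poly_pcompose)
    then have "a - 1 \<in> \<real>" using H by blast
    then have "a \<in> \<real>" by (metis Reals_1 Reals_add diff_add_cancel)
    moreover have "a \<noteq> 0" using \<open>poly Qc a = 0\<close> Qc0 by (auto simp: poly_0_coeff_0)
    ultimately show "a \<in> \<real> \<and> a \<noteq> 0" by simp
  qed
  have dec: "Polynomial.smult (lead_coeff Qc) (\<Prod>x\<in>#proots Qc. [:-x, 1:]) = Qc"
    by (rule complex_poly_decompose_multiset)
  have lc: "lead_coeff Qc \<noteq> 0" using Qcnz by simp
  have "Fq Qc = (\<Sum>a\<in>#proots Qc. (1/a)^4)"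
    using Fq_prod[of "proots Qc"] roots_real Fq_smult[OF lc, of "\<Prod>x\<in>#proots Qc. [:-x, 1:]"] dec
    by auto
  moreover have "Fq Qc = of_real (Fq Q)" unfolding Qc_def by (rule Fq_of_real)
  ultimately have "of_real (Fq Q) = complex_of_real (\<Sum>a\<in>#proots Qc. (1/Re a)^4)"
    and ge: "(\<Sum>a\<in>#proots Qc. (1/Re a)^4) \<ge> 0"
    using sum_mset_real_nonneg[of "proots Qc"] roots_real by auto
  then have "Fq Q = (\<Sum>a\<in>#proots Qc. (1/Re a)^4)" using of_real_eq_iff by blast
  with ge F show False unfolding Q_def by simp
qed


lemma pcompose_power_left': "pcompose (q ^ n) r = (pcompose q r) ^ n"
  by (induction n) (simp_all add: pcompose_mult pcompose_1)

definition Dpoly :: "real poly" where "Dpoly = [:0,1:] * [:1,1:]^4"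

lemma Dpoly_shift_coeff:
  "Polynomial.coeff (pcompose Dpoly [:-1,1:]) 0 = 0" "Polynomial.coeff (pcompose Dpoly [:-1,1:]) 1 = 0"
  "Polynomial.coeff (pcompose Dpoly [:-1,1:]) 2 = 0" "Polynomial.coeff (pcompose Dpoly [:-1,1:]) 3 = 0"
  "Polynomial.coeff (pcompose Dpoly [:-1,1:]) 4 = -1"
proof -
  have "pcompose Dpoly [:-1,1:] = Polynomial.monom 1 4 * [:-1,1:]"
    unfolding Dpoly_def by (simp add: pcompose_mult pcompose_power_left' pcompose_pCons monom_altdef mult.commute)
  then show "Polynomial.coeff (pcompose Dpoly [:-1,1:]) 0 = 0" "Polynomial.coeff (pcompose Dpoly [:-1,1:]) 1 = 0"
  "Polynomial.coeff (pcompose Dpoly [:-1,1:]) 2 = 0" "Polynomial.coeff (pcompose Dpoly [:-1,1:]) 3 = 0"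
  "Polynomial.coeff (pcompose Dpoly [:-1,1:]) 4 = -1" by (simp_all add: coeff_monom_mult coeff_pCons numeral_eq_Suc)
qed

lemma eventually_nonreal:
  fixes H :: "real poly"
  assumes "poly H (-1) < 0"
  shows "\<exists>M. \<forall>m\<ge>M. \<exists>z::complex. poly (map_poly complex_of_real (H + Polynomial.smult (real m) Dpoly)) z = 0 \<and> z \<notin> \<real>"
proof -
  define A where "A = pcompose H [:-1,1:]"
  define K where "K = Fq A"
  have A0: "Polynomial.coeff A 0 = poly H (-1)" unfolding A_def by (simp add: poly_0_coeff_0[symmetric] poly_pcompose)
  have A0n: "Polynomial.coeff A 0 < 0" using A0 assms by simp
  define M where "M = nat (ceiling (K * (- Polynomial.coeff A 0) / 4)) + 1"
  show ?thesis
  proof (rule exI, intro allI impI)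
    fix m assume "M \<le> m"
    then have mM: "real m > K * (- Polynomial.coeff A 0) / 4" unfolding M_def by linarith
    let ?p = "H + Polynomial.smult (real m) Dpoly"
    have Q: "pcompose ?p [:-1,1:] = A + Polynomial.smult (real m) (pcompose Dpoly [:-1,1:])"
      unfolding A_def by (simp add: pcompose_add pcompose_smult)
    have ck: "\<And>k. Polynomial.coeff (pcompose ?p [:-1,1:]) k = Polynomial.coeff A k + real m * Polynomial.coeff (pcompose Dpoly [:-1,1:]) k"
      unfolding Q coeff_add coeff_smult ..
    have c0: "Polynomial.coeff (pcompose ?p [:-1,1:]) 0 = Polynomial.coeff A 0" using ck[of 0] Dpoly_shift_coeff(1) by simp
    have c1: "Polynomial.coeff (pcompose ?p [:-1,1:]) 1 = Polynomial.coeff A 1" using ck[of 1] Dpoly_shift_coeff(2) by simp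
    have c2: "Polynomial.coeff (pcompose ?p [:-1,1:]) 2 = Polynomial.coeff A 2" using ck[of 2] Dpoly_shift_coeff(3) by simp
    have c3: "Polynomial.coeff (pcompose ?p [:-1,1:]) 3 = Polynomial.coeff A 3" using ck[of 3] Dpoly_shift_coeff(4) by simp
    have c4: "Polynomial.coeff (pcompose ?p [:-1,1:]) 4 = Polynomial.coeff A 4 - real m" using ck[of 4] Dpoly_shift_coeff(5) by simp
    have "Fq (pcompose ?p [:-1,1:]) = K + 4 * real m / Polynomial.coeff A 0"
      unfolding Fq_Fpol c0 c1 c2 c3 c4 K_def using A0n
      by (simp add: Fpol_def field_simps)
    also have "\<dots> < 0"
    proof -
      have "4 * real m > K * (- Polynomial.coeff A 0)" using mM by simp
      then have "4 * real m / (- Polynomial.coeff A 0) > K" using A0n by (simp add: field_simps)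
      then show ?thesis using A0n by (simp add: field_simps)
    qed
    finally have F: "Fq (pcompose ?p [:-1,1:]) < 0" .
    have D1: "poly Dpoly (-1) = 0" by (simp add: Dpoly_def)
    have "poly ?p (-1) \<noteq> 0" using assms by (simp add: D1)
    then show "\<exists>z::complex. poly (map_poly complex_of_real ?p) z = 0 \<and> z \<notin> \<real>"
      using nonreal_root F by blast
  qed
qed




definition gterm :: "nat \<Rightarrow> nat \<Rightarrow> real poly" where
  "gterm N j = Polynomial.monom 1 j * [:1,-1:] ^ (N - j)"

lemma h_poly_gterm: "h_poly N K = (\<Sum>\<sigma>\<in>K. gterm N (card \<sigma>))"
  unfolding h_poly_def gterm_def ..

lemma link_disj: "\<tau> \<in> link K \<eta> \<Longrightarrow> \<tau> \<inter> \<eta> = {}" unfolding link_def by auto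
lemma link_in: "\<tau> \<in> link K \<eta> \<Longrightarrow> \<tau> \<in> K" unfolding link_def by auto
lemma link_un: "\<tau> \<in> link K \<eta> \<Longrightarrow> \<eta> \<union> \<tau> \<in> K" unfolding link_def by auto

lemma notin_vertices: "e \<notin> vertices K \<Longrightarrow> \<sigma> \<in> K \<Longrightarrow> e \<notin> \<sigma>"
  unfolding vertices_def by auto

lemma edge_sub_decomp:
  assumes eta: "\<eta> = {s, t}"
  shows "edge_sub \<eta> e K = {\<sigma> \<in> K. \<not> \<eta> \<subseteq> \<sigma>} \<union> (insert e ` link K \<eta>)
      \<union> ((\<lambda>\<tau>. \<tau> \<union> {s, e}) ` link K \<eta>) \<union> ((\<lambda>\<tau>. \<tau> \<union> {t, e}) ` link K \<eta>)"
  unfolding edge_sub_def eta by blast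

lemma K_decomp:
  assumes sc: "simplicial_complex K"
  shows "K = {\<sigma> \<in> K. \<not> \<eta> \<subseteq> \<sigma>} \<union> ((\<lambda>\<tau>. \<tau> \<union> \<eta>) ` link K \<eta>)"
proof -
  have "\<sigma> \<in> (\<lambda>\<tau>. \<tau> \<union> \<eta>) ` link K \<eta>" if "\<sigma> \<in> K" "\<eta> \<subseteq> \<sigma>" for \<sigma>
  proof
    show "\<sigma> = (\<sigma> - \<eta>) \<union> \<eta>" using that by auto
    have "\<sigma> - \<eta> \<in> K" using sc that unfolding simplicial_complex_def by blast
    then show "\<sigma> - \<eta> \<in> link K \<eta>" using that unfolding link_def
      by (auto simp: Un_absorb1 Un_Diff_cancel)
  qed
  moreover have "\<tau> \<union> \<eta> \<in> K" if "\<tau> \<in> link K \<eta>" for \<tau>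
    using that unfolding link_def by (auto simp: Un_commute)
  ultimately show ?thesis by blast
qed

lemma h_edge_sub:
  assumes sc: "simplicial_complex K" and eta: "\<eta> = {s, t}" "s \<noteq> t" "\<eta> \<in> K"
    and e: "e \<notin> vertices K"
  shows "h_poly N (edge_sub \<eta> e K) = h_poly N K
     + (\<Sum>\<tau>\<in>link K \<eta>. gterm N (card \<tau> + 1) + gterm N (card \<tau> + 2))"
proof -
  let ?L = "link K \<eta>" and ?A = "{\<sigma> \<in> K. \<not> \<eta> \<subseteq> \<sigma>}"
  have finK: "finite K" and finF: "\<And>\<sigma>. \<sigma> \<in> K \<Longrightarrow> finite \<sigma>" using sc unfolding simplicial_complex_def by auto
  have finL: "finite ?L" using finK unfolding link_def by auto
  have finA: "finite ?A" using finK by auto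
  have "e \<notin> \<eta>" using notin_vertices[OF e eta(3)] .
  then have se: "s \<noteq> e" "t \<noteq> e" using eta by auto
  have Lprops: "finite \<tau> \<and> e \<notin> \<tau> \<and> s \<notin> \<tau> \<and> t \<notin> \<tau>" if "\<tau> \<in> ?L" for \<tau>
  proof -
    have "\<tau> \<in> K" using link_in[OF that] .
    moreover have "\<tau> \<inter> \<eta> = {}" using link_disj[OF that] .
    ultimately show ?thesis using finF notin_vertices[OF e] eta by blast
  qed
  have eA: "\<And>\<sigma>. \<sigma> \<in> ?A \<Longrightarrow> e \<notin> \<sigma>" using notin_vertices[OF e] by blast
  have inj1: "inj_on (insert e) ?L"
    by (rule inj_onI) (metis Lprops insert_ident)
  have inj2: "inj_on (\<lambda>\<tau>. \<tau> \<union> {s, e}) ?L"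
  proof (rule inj_onI)
    fix x y assume "x \<in> ?L" "y \<in> ?L" "x \<union> {s, e} = y \<union> {s, e}"
    then have "(x \<union> {s,e}) - {s,e} = (y \<union> {s,e}) - {s,e}" by simp
    then show "x = y" using Lprops \<open>x \<in> ?L\<close> \<open>y \<in> ?L\<close> by auto
  qed
  have inj3: "inj_on (\<lambda>\<tau>. \<tau> \<union> {t, e}) ?L"
  proof (rule inj_onI)
    fix x y assume "x \<in> ?L" "y \<in> ?L" "x \<union> {t, e} = y \<union> {t, e}"
    then have "(x \<union> {t,e}) - {t,e} = (y \<union> {t,e}) - {t,e}" by simp
    then show "x = y" using Lprops \<open>x \<in> ?L\<close> \<open>y \<in> ?L\<close> by auto
  qed
  have inj4: "inj_on (\<lambda>\<tau>. \<tau> \<union> \<eta>) ?L"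
  proof (rule inj_onI)
    fix x y assume "x \<in> ?L" "y \<in> ?L" "x \<union> \<eta> = y \<union> \<eta>"
    then have "(x \<union> \<eta>) - \<eta> = (y \<union> \<eta>) - \<eta>" by simp
    then show "x = y" using link_disj \<open>x \<in> ?L\<close> \<open>y \<in> ?L\<close> by blast
  qed
  have c1: "\<And>\<tau>. \<tau> \<in> ?L \<Longrightarrow> card (insert e \<tau>) = card \<tau> + 1" using Lprops by simp
  have c2: "\<And>\<tau>. \<tau> \<in> ?L \<Longrightarrow> card (\<tau> \<union> {s, e}) = card \<tau> + 2" using Lprops se by simp
  have c3: "\<And>\<tau>. \<tau> \<in> ?L \<Longrightarrow> card (\<tau> \<union> {t, e}) = card \<tau> + 2" using Lprops se by simp
  have c4: "\<And>\<tau>. \<tau> \<in> ?L \<Longrightarrow> card (\<tau> \<union> \<eta>) = card \<tau> + 2" using Lprops eta by simp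
  let ?f = "\<lambda>\<sigma>. gterm N (card \<sigma>)"
  have "h_poly N (edge_sub \<eta> e K) = sum ?f ?A + sum ?f (insert e ` ?L)
      + sum ?f ((\<lambda>\<tau>. \<tau> \<union> {s, e}) ` ?L) + sum ?f ((\<lambda>\<tau>. \<tau> \<union> {t, e}) ` ?L)"
  proof -
    let ?B1 = "insert e ` ?L" and ?B2 = "(\<lambda>\<tau>. \<tau> \<union> {s, e}) ` ?L" and ?B3 = "(\<lambda>\<tau>. \<tau> \<union> {t, e}) ` ?L"
    have d1: "?A \<inter> ?B1 = {}" using eA by blast
    have d2: "(?A \<union> ?B1) \<inter> ?B2 = {}"
    proof -
      have "\<sigma> \<notin> ?B2" if "\<sigma> \<in> ?A \<union> ?B1" for \<sigma>
      proof
        assume "\<sigma> \<in> ?B2"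
        then have "s \<in> \<sigma>" "e \<in> \<sigma>" by auto
        with that eA Lprops se show False by auto
      qed
      then show ?thesis by blast
    qed
    have d3: "(?A \<union> ?B1 \<union> ?B2) \<inter> ?B3 = {}"
    proof -
      have "\<sigma> \<notin> ?B3" if "\<sigma> \<in> ?A \<union> ?B1 \<union> ?B2" for \<sigma>
      proof
        assume "\<sigma> \<in> ?B3"
        then obtain \<tau> where "\<tau> \<in> ?L" "\<sigma> = \<tau> \<union> {t, e}" by auto
        then have "t \<in> \<sigma>" "e \<in> \<sigma>" "s \<notin> \<sigma>" using Lprops se eta(2) by auto
        with that eA Lprops se show False by auto
      qed
      then show ?thesis by blast
    qed
    have fB: "finite ?B1" "finite ?B2" "finite ?B3" using finL by auto
    show ?thesis
      unfolding h_poly_gterm edge_sub_decomp[OF eta(1)]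
      by (simp only: sum.union_disjoint finA fB d1 d2 d3 finite_UnI)
  qed
  also have "\<dots> = sum ?f ?A + (\<Sum>\<tau>\<in>?L. gterm N (card \<tau> + 1)) + (\<Sum>\<tau>\<in>?L. gterm N (card \<tau> + 2))
      + (\<Sum>\<tau>\<in>?L. gterm N (card \<tau> + 2))"
  proof -
    have s1: "sum ?f (insert e ` ?L) = (\<Sum>\<tau>\<in>?L. gterm N (card \<tau> + 1))"
      unfolding sum.reindex[OF inj1] o_def by (rule sum.cong[OF refl]) (simp only: c1)
    have s2: "sum ?f ((\<lambda>\<tau>. \<tau> \<union> {s, e}) ` ?L) = (\<Sum>\<tau>\<in>?L. gterm N (card \<tau> + 2))"
      unfolding sum.reindex[OF inj2] o_def by (rule sum.cong[OF refl]) (simp only: c2)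
    have s3: "sum ?f ((\<lambda>\<tau>. \<tau> \<union> {t, e}) ` ?L) = (\<Sum>\<tau>\<in>?L. gterm N (card \<tau> + 2))"
      unfolding sum.reindex[OF inj3] o_def by (rule sum.cong[OF refl]) (simp only: c3)
    show ?thesis unfolding s1 s2 s3 ..
  qed
  also have "h_poly N K = sum ?f ?A + (\<Sum>\<tau>\<in>?L. gterm N (card \<tau> + 2))"
  proof -
    have d: "?A \<inter> (\<lambda>\<tau>. \<tau> \<union> \<eta>) ` ?L = {}" by blast
    have "h_poly N K = sum ?f ?A + sum ?f ((\<lambda>\<tau>. \<tau> \<union> \<eta>) ` ?L)"
      unfolding h_poly_gterm by (subst K_decomp[OF sc, of \<eta>], rule sum.union_disjoint, use finA finL d in auto)
    also have "sum ?f ((\<lambda>\<tau>. \<tau> \<union> \<eta>) ` ?L) = (\<Sum>\<tau>\<in>?L. gterm N (card \<tau> + 2))"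
      unfolding sum.reindex[OF inj4] o_def by (rule sum.cong[OF refl]) (simp only: c4)
    finally show ?thesis .
  qed
  ultimately show ?thesis by (simp add: sum.distrib algebra_simps)
qed



lemma edge_sub_sc:
  assumes sc: "simplicial_complex K" and eta: "\<eta> = {s, t}" "s \<noteq> t" "\<eta> \<in> K"
    and e: "e \<notin> vertices K"
  shows "simplicial_complex (edge_sub \<eta> e K)"
proof -
  let ?L = "link K \<eta>" and ?A = "{\<sigma> \<in> K. \<not> \<eta> \<subseteq> \<sigma>}"
  have finK: "finite K" and finF: "\<And>\<sigma>. \<sigma> \<in> K \<Longrightarrow> finite \<sigma>" and e0: "{} \<in> K"
    and cl: "\<And>\<sigma> \<tau>. \<sigma> \<in> K \<Longrightarrow> \<tau> \<subseteq> \<sigma> \<Longrightarrow> \<tau> \<in> K"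
    using sc unfolding simplicial_complex_def by blast+
  have finL: "finite ?L" using finK unfolding link_def by auto
  have "e \<notin> \<eta>" using notin_vertices[OF e eta(3)] .
  then have se: "s \<noteq> e" "t \<noteq> e" using eta by auto
  have Lcl: "\<tau>' \<in> ?L" if "\<tau> \<in> ?L" "\<tau>' \<subseteq> \<tau>" for \<tau> \<tau>'
  proof -
    have a: "\<tau> \<in> K" "\<eta> \<union> \<tau> \<in> K" "\<tau> \<inter> \<eta> = {}"
      using link_in[OF that(1)] link_un[OF that(1)] link_disj[OF that(1)] by auto
    have "\<tau>' \<in> K" using cl[OF a(1) that(2)] .
    moreover have "\<eta> \<union> \<tau>' \<in> K" using cl[OF a(2)] that(2) by blast
    moreover have "\<tau>' \<inter> \<eta> = {}" using a(3) that(2) by blast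
    ultimately show ?thesis unfolding link_def by (simp add: Int_commute)
  qed
  note dec = edge_sub_decomp[OF eta(1), of e K]
  have fin: "finite (edge_sub \<eta> e K)" unfolding dec using finK finL by auto
  have emp: "{} \<in> edge_sub \<eta> e K" unfolding dec using e0 eta by auto
  have ff: "\<forall>\<sigma>\<in>edge_sub \<eta> e K. finite \<sigma>" unfolding dec using finF link_in by auto
  have inA: "\<sigma> \<in> edge_sub \<eta> e K" if "\<sigma> \<in> K" "\<not> \<eta> \<subseteq> \<sigma>" for \<sigma>
    unfolding dec using that by blast
  have inB1: "insert e x \<in> edge_sub \<eta> e K" if "x \<in> ?L" for x
    unfolding dec using that by blast
  have inB2: "x \<union> {s,e} \<in> edge_sub \<eta> e K" if "x \<in> ?L" for x
    unfolding dec using that by blast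
  have inB3: "x \<union> {t,e} \<in> edge_sub \<eta> e K" if "x \<in> ?L" for x
    unfolding dec using that by blast
  have clo: "\<tau> \<in> edge_sub \<eta> e K" if sig: "\<sigma> \<in> edge_sub \<eta> e K" and sub: "\<tau> \<subseteq> \<sigma>" for \<sigma> \<tau>
  proof -
    consider "\<sigma> \<in> K" "\<not> \<eta> \<subseteq> \<sigma>" | x where "x \<in> ?L" "\<sigma> = insert e x" | x where "x \<in> ?L" "\<sigma> = x \<union> {s,e}"
      | x where "x \<in> ?L" "\<sigma> = x \<union> {t,e}"
      using sig unfolding dec by blast
    then show ?thesis
    proof cases
      case 1 then show ?thesis using sub cl inA by blast
    next
      case (2 x)
      show ?thesis
      proof (cases "e \<in> \<tau>")
        case True
        then have "\<tau> = insert e (\<tau> - {e})" by auto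
        moreover have "\<tau> - {e} \<in> ?L" using Lcl[OF 2(1), of "\<tau> - {e}"] 2 sub by blast
        ultimately show ?thesis using inB1 by metis
      next
        case False
        then have "\<tau> \<subseteq> x" using 2 sub by auto
        then have "\<tau> \<in> ?L" using Lcl[OF 2(1)] by auto
        then have "\<tau> \<in> K" "\<not> \<eta> \<subseteq> \<tau>" using link_in link_disj eta by fastforce+
        then show ?thesis using inA by blast
      qed
    next
      case (3 x)
      show ?thesis
      proof (cases "e \<in> \<tau>")
        case True
        show ?thesis
        proof (cases "s \<in> \<tau>")
          case True
          then have "\<tau> = (\<tau> - {s,e}) \<union> {s,e}" using \<open>e \<in> \<tau>\<close> by auto
          moreover have "\<tau> - {s,e} \<in> ?L" using Lcl[OF 3(1), of "\<tau> - {s,e}"] 3 sub by blast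
          ultimately show ?thesis using inB2 by metis
        next
          case False
          then have "\<tau> = insert e (\<tau> - {e})" using \<open>e \<in> \<tau>\<close> by auto
          moreover have "\<tau> - {e} \<in> ?L" using Lcl[OF 3(1), of "\<tau> - {e}"] 3 sub False by blast
          ultimately show ?thesis using inB1 by metis
        qed
      next
        case False
        then have "\<tau> \<subseteq> \<eta> \<union> x" using 3 sub eta by auto
        moreover have "\<eta> \<union> x \<in> K" using link_un[OF 3(1)] .
        ultimately have "\<tau> \<in> K" using cl by blast
        moreover have "t \<notin> \<tau>" using False 3 sub link_disj[OF 3(1)] eta se by auto
        ultimately show ?thesis using inA eta by blast
      qed
    next
      case (4 x)
      show ?thesis
      proof (cases "e \<in> \<tau>")
        case True
        show ?thesis
        proof (cases "t \<in> \<tau>")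
          case True
          then have "\<tau> = (\<tau> - {t,e}) \<union> {t,e}" using \<open>e \<in> \<tau>\<close> by auto
          moreover have "\<tau> - {t,e} \<in> ?L" using Lcl[OF 4(1), of "\<tau> - {t,e}"] 4 sub by blast
          ultimately show ?thesis using inB3 by metis
        next
          case False
          then have "\<tau> = insert e (\<tau> - {e})" using \<open>e \<in> \<tau>\<close> by auto
          moreover have "\<tau> - {e} \<in> ?L" using Lcl[OF 4(1), of "\<tau> - {e}"] 4 sub False by blast
          ultimately show ?thesis using inB1 by metis
        qed
      next
        case False
        then have "\<tau> \<subseteq> \<eta> \<union> x" using 4 sub eta by auto
        moreover have "\<eta> \<union> x \<in> K" using link_un[OF 4(1)] .
        ultimately have "\<tau> \<in> K" using cl by blast
        moreover have "s \<notin> \<tau>" using False 4 sub link_disj[OF 4(1)] eta se by auto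
        ultimately show ?thesis using inA eta by blast
      qed
    qed
  qed
  show ?thesis unfolding simplicial_complex_def using fin emp ff clo by blast
qed


lemma edge_sub_vertices:
  assumes "\<eta> \<in> K"
  shows "vertices (edge_sub \<eta> e K) \<subseteq> insert e (vertices K)"
proof
  fix v assume "v \<in> vertices (edge_sub \<eta> e K)"
  then obtain \<sigma> where s: "\<sigma> \<in> edge_sub \<eta> e K" "v \<in> \<sigma>" unfolding vertices_def by auto
  then consider "\<sigma> \<in> K" | \<tau> \<rho> where "\<sigma> = \<tau> \<union> \<rho>" "\<tau> \<in> link K \<eta>" "\<rho> \<subseteq> insert e \<eta>"
    unfolding edge_sub_def by blast
  then show "v \<in> insert e (vertices K)"
  proof cases
    case 1 then show ?thesis using s unfolding vertices_def by auto
  next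
    case 2 then show ?thesis using s assms link_in[OF 2(2)] unfolding vertices_def by auto
  qed
qed

lemma edge_sub_link:
  assumes sc: "simplicial_complex K" and eta: "\<eta> = {s, t}" "s \<noteq> t" "\<eta> \<in> K"
    and e: "e \<notin> vertices K" and p: "p \<in> \<eta>"
  shows "link (edge_sub \<eta> e K) {p, e} = link K \<eta>"
proof -
  let ?L = "link K \<eta>" and ?A = "{\<sigma> \<in> K. \<not> \<eta> \<subseteq> \<sigma>}"
  note dec = edge_sub_decomp[OF eta(1), of e K]
  have "e \<notin> \<eta>" using notin_vertices[OF e eta(3)] .
  then have se: "s \<noteq> e" "t \<noteq> e" using eta by auto
  have Lp: "e \<notin> \<tau> \<and> s \<notin> \<tau> \<and> t \<notin> \<tau> \<and> \<tau> \<in> K" if "\<tau> \<in> ?L" for \<tau>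
    using link_in[OF that] link_disj[OF that] notin_vertices[OF e] eta by blast
  have eA: "\<And>\<sigma>. \<sigma> \<in> ?A \<Longrightarrow> e \<notin> \<sigma>" using notin_vertices[OF e] by blast
  show ?thesis
  proof (rule Set.set_eqI, rule iffI)
    fix \<tau> assume "\<tau> \<in> link (edge_sub \<eta> e K) {p, e}"
    then have t1: "{p,e} \<union> \<tau> \<in> edge_sub \<eta> e K" and t2: "{p,e} \<inter> \<tau> = {}"
      unfolding link_def by auto
    have "e \<in> {p,e} \<union> \<tau>" by simp
    then consider x where "x \<in> ?L" "{p,e} \<union> \<tau> = insert e x" | x where "x \<in> ?L" "{p,e} \<union> \<tau> = x \<union> {s,e}"
      | x where "x \<in> ?L" "{p,e} \<union> \<tau> = x \<union> {t,e}"
      using t1 eA unfolding dec by blast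
    then show "\<tau> \<in> ?L"
    proof cases
      case (1 x)
      then have "p \<in> insert e x" by blast
      moreover have "p \<notin> x" "p \<noteq> e" using Lp[OF 1(1)] p eta \<open>e \<notin> \<eta>\<close> by auto
      ultimately show ?thesis by blast
    next
      case (2 x)
      have "p \<in> x \<union> {s,e}" using 2(2) by blast
      moreover have "p \<notin> x" "p \<noteq> e" using Lp[OF 2(1)] p eta \<open>e \<notin> \<eta>\<close> by auto
      ultimately have "p = s" by blast
      then have "\<tau> = ({p,e} \<union> \<tau>) - {s,e}" using t2 by auto
      also have "\<dots> = x" unfolding 2(2) using Lp[OF 2(1)] by auto
      finally have "\<tau> = x" .
      then show ?thesis using 2 by simp
    next
      case (3 x)
      have "p \<in> x \<union> {t,e}" using 3(2) by blast
      moreover have "p \<notin> x" "p \<noteq> e" using Lp[OF 3(1)] p eta \<open>e \<notin> \<eta>\<close> by auto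
      ultimately have "p = t" by blast
      then have "\<tau> = ({p,e} \<union> \<tau>) - {t,e}" using t2 by auto
      also have "\<dots> = x" unfolding 3(2) using Lp[OF 3(1)] by auto
      finally have "\<tau> = x" .
      then show ?thesis using 3 by simp
    qed
  next
    fix \<tau> assume L: "\<tau> \<in> ?L"
    have "\<tau> \<in> edge_sub \<eta> e K" using Lp[OF L] eta unfolding dec by blast
    moreover have "{p,e} \<union> \<tau> \<in> edge_sub \<eta> e K"
    proof -
      have "p = s \<or> p = t" using p eta by auto
      then show ?thesis unfolding dec using L by blast
    qed
    moreover have "{p,e} \<inter> \<tau> = {}" using Lp[OF L] p eta by auto
    ultimately show "\<tau> \<in> link (edge_sub \<eta> e K) {p, e}" unfolding link_def by blast
  qed
qed

lemma edge_sub_newedge: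
  assumes eta: "\<eta> = {s, t}" and p: "p \<in> \<eta>" and L: "{} \<in> link K \<eta>"
  shows "{p, e} \<in> edge_sub \<eta> e K"
proof -
  have "p = s \<or> p = t" using p eta by auto
  then show ?thesis unfolding edge_sub_decomp[OF eta] using L by auto
qed




definition Delta :: "nat \<Rightarrow> 'a set set \<Rightarrow> real poly" where
  "Delta N L = (\<Sum>\<tau>\<in>L. gterm N (card \<tau> + 1) + gterm N (card \<tau> + 2))"

lemma sub_iter_props:
  assumes sc: "simplicial_complex X" and eta: "\<eta> \<in> X" "card \<eta> = 2"
    and msd: "multi_sub_data X \<eta> m ed e"
  shows "k \<le> m \<Longrightarrow> simplicial_complex (sub_iter ed e k X)
     \<and> vertices (sub_iter ed e k X) \<subseteq> vertices X \<union> e ` {..<k}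
     \<and> h_poly N (sub_iter ed e k X) = h_poly N X + Polynomial.smult (real k) (Delta N (link X \<eta>))
     \<and> (k < m \<longrightarrow> ed k \<in> sub_iter ed e k X \<and> card (ed k) = 2 \<and> link (sub_iter ed e k X) (ed k) = link X \<eta>)"
proof (induction k)
  case 0
  have "ed 0 = \<eta>" using msd unfolding multi_sub_data_def by blast
  then show ?case using sc eta(1) eta(2) by simp
next
  case (Suc k)
  then have km: "k < m" by simp
  let ?K = "sub_iter ed e k X"
  from Suc.IH km have IH: "simplicial_complex ?K" "vertices ?K \<subseteq> vertices X \<union> e ` {..<k}"
    "h_poly N ?K = h_poly N X + Polynomial.smult (real k) (Delta N (link X \<eta>))"
    "ed k \<in> ?K" "card (ed k) = 2" "link ?K (ed k) = link X \<eta>" by auto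
  obtain s t where st: "ed k = {s, t}" "s \<noteq> t" using IH(5) card_2_iff by metis
  have injm: "inj_on e {..<m}" and disj: "e ` {..<m} \<inter> vertices X = {}"
    using msd unfolding multi_sub_data_def by auto
  have "e k \<notin> vertices X" using disj km by blast
  moreover have "e k \<notin> e ` {..<k}"
  proof
    assume "e k \<in> e ` {..<k}"
    then obtain x where "x < k" "e k = e x" by auto
    then have "k = x" using injm km unfolding inj_on_def by (meson lessThan_iff order.strict_trans)
    then show False using \<open>x < k\<close> by simp
  qed
  ultimately have ek: "e k \<notin> vertices ?K" using IH(2) by blast
  have eq: "sub_iter ed e (Suc k) X = edge_sub (ed k) (e k) ?K" by simp
  have sc': "simplicial_complex (sub_iter ed e (Suc k) X)"
    unfolding eq by (rule edge_sub_sc[OF IH(1) st IH(4) ek])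
  have v': "vertices (sub_iter ed e (Suc k) X) \<subseteq> vertices X \<union> e ` {..<Suc k}"
  proof -
    have "vertices (edge_sub (ed k) (e k) ?K) \<subseteq> insert (e k) (vertices ?K)" by (rule edge_sub_vertices[OF IH(4)])
    also have "\<dots> \<subseteq> vertices X \<union> e ` {..<Suc k}" using IH(2) by (auto simp: lessThan_Suc)
    finally show ?thesis unfolding eq .
  qed
  have h': "h_poly N (sub_iter ed e (Suc k) X) = h_poly N X + Polynomial.smult (real (Suc k)) (Delta N (link X \<eta>))"
  proof -
    have "h_poly N (sub_iter ed e (Suc k) X) = h_poly N ?K + Delta N (link ?K (ed k))"
      unfolding eq Delta_def by (rule h_edge_sub[OF IH(1) st IH(4) ek])
    then show ?thesis using IH(3) IH(6) by (simp add: algebra_simps smult_add_left)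
  qed
  have new: "ed (Suc k) \<in> sub_iter ed e (Suc k) X \<and> card (ed (Suc k)) = 2
      \<and> link (sub_iter ed e (Suc k) X) (ed (Suc k)) = link X \<eta>" if sk: "Suc k < m"
  proof -
    have "\<forall>k. Suc k < m \<longrightarrow> (\<exists>p\<in>ed k. ed (Suc k) = {e k, p})"
      using msd unfolding multi_sub_data_def by (elim conjE)
    then obtain p where p: "p \<in> ed k" "ed (Suc k) = {e k, p}" using sk by blast
    have pe: "p \<noteq> e k" using p(1) notin_vertices[OF ek IH(4)] by blast
    have "{} \<in> ?K" using IH(1) unfolding simplicial_complex_def by blast
    then have e0: "{} \<in> link ?K (ed k)" using IH(4) unfolding link_def by simp
    have "{p, e k} \<in> edge_sub (ed k) (e k) ?K"
      using edge_sub_newedge[OF st(1) p(1) e0] .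
    moreover have "link (edge_sub (ed k) (e k) ?K) {p, e k} = link ?K (ed k)"
      by (rule edge_sub_link[OF IH(1) st IH(4) ek p(1)])
    ultimately show ?thesis unfolding eq p(2) using pe IH(6) by (simp add: insert_commute)
  qed
  show ?case using sc' v' h' new by blast
qed




lemma cross_Suc_eq: "cross a b (Suc n) = cross a b n \<union> insert (a n) ` cross a b n \<union> insert (b n) ` cross a b n"
  unfolding cross.simps Defs.join_def by auto

lemma cross_sub: "\<tau> \<in> cross a b n \<Longrightarrow> \<tau> \<subseteq> a ` {..<n} \<union> b ` {..<n} \<and> finite \<tau> \<and> card \<tau> \<le> n"
proof (induction n arbitrary: \<tau>)
  case 0 then show ?case by simp
next
  case (Suc n)
  then consider "\<tau> \<in> cross a b n" | x where "x \<in> cross a b n" "\<tau> = insert (a n) x"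
     | x where "x \<in> cross a b n" "\<tau> = insert (b n) x" unfolding cross_Suc_eq by blast
  then show ?case
  proof cases
    case 1 then show ?thesis using Suc.IH[of \<tau>] by (auto simp: lessThan_Suc)
  next
    case (2 x) then show ?thesis using Suc.IH[of x] card_insert_le_m1[of n x]
      by (auto simp: lessThan_Suc card_insert_if)
  next
    case (3 x) then show ?thesis using Suc.IH[of x]
      by (auto simp: lessThan_Suc card_insert_if)
  qed
qed

lemma cross_mono: "cross a b n \<subseteq> cross a b (Suc n)"
  unfolding cross_Suc_eq by blast

lemma cross_empty: "{} \<in> cross a b n"
  by (induction n) (use cross_mono in auto)

lemma inj_new: "inj_on a {..<N} \<Longrightarrow> (n::nat) < N \<Longrightarrow> a n \<notin> a ` {..<n}"
proof
  assume i: "inj_on a {..<N}" "n < N" "a n \<in> a ` {..<n}"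
  then obtain x where "x < n" "a n = a x" by auto
  moreover have "x < N" using \<open>x < n\<close> i(2) by simp
  ultimately have "n = x" using inj_onD[OF i(1)] i(2) by simp
  then show False using \<open>x < n\<close> by simp
qed

lemma cross_a: "j \<le> n \<Longrightarrow> a ` {..<j} \<in> cross a b n"
proof (induction n arbitrary: j)
  case 0 then show ?case by simp
next
  case (Suc n)
  show ?case
  proof (cases "j = Suc n")
    case True
    have "a ` {..<n} \<in> cross a b n" using Suc.IH by simp
    then have "insert (a n) (a ` {..<n}) \<in> cross a b (Suc n)" unfolding cross_Suc_eq by blast
    then show ?thesis using True by (simp add: lessThan_Suc)
  next
    case False
    then show ?thesis using Suc cross_mono by fastforce
  qed
qed

definition fterm :: "nat \<Rightarrow> nat \<Rightarrow> real poly" where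
  "fterm n c = [:0,1:] ^ c * [:1,-1:] ^ (n - c)"

lemma cross_sum:
  assumes inja: "inj_on a {..<N}" and injb: "inj_on b {..<N}" and disj: "a ` {..<N} \<inter> b ` {..<N} = {}"
  shows "n \<le> N \<Longrightarrow> (\<Sum>\<tau>\<in>cross a b n. fterm n (card \<tau>)) = [:1,1:] ^ n"
proof (induction n)
  case 0 then show ?case by (simp add: fterm_def)
next
  case (Suc n)
  then have nN: "n < N" by simp
  let ?C = "cross a b n"
  have fin: "finite ?C"
  proof -
    have "?C \<subseteq> Pow (a ` {..<n} \<union> b ` {..<n})" using cross_sub by blast
    then show ?thesis by (rule finite_subset) simp
  qed
  have an: "a n \<notin> \<tau>" "b n \<notin> \<tau>" if "\<tau> \<in> ?C" for \<tau>
  proof -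
    have sub: "\<tau> \<subseteq> a ` {..<n} \<union> b ` {..<n}" using cross_sub[OF that] by blast
    have "a n \<notin> a ` {..<n}" using inj_new[OF inja nN] .
    moreover have "a n \<notin> b ` {..<n}"
    proof
      assume "a n \<in> b ` {..<n}"
      then have "a n \<in> b ` {..<N}" using nN by auto
      moreover have "a n \<in> a ` {..<N}" using nN by auto
      ultimately show False using disj by blast
    qed
    moreover have "b n \<notin> b ` {..<n}" using inj_new[OF injb nN] .
    moreover have "b n \<notin> a ` {..<n}"
    proof
      assume "b n \<in> a ` {..<n}"
      then have "b n \<in> a ` {..<N}" using nN by auto
      moreover have "b n \<in> b ` {..<N}" using nN by auto
      ultimately show False using disj by blast
    qed
    ultimately show "a n \<notin> \<tau>" "b n \<notin> \<tau>" using sub by blast+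
  qed
  have ab: "a n \<noteq> b n" using disj nN by auto
  have fc: "finite \<tau>" "card \<tau> \<le> n" if "\<tau> \<in> ?C" for \<tau> using cross_sub[OF that] by auto
  have inja': "inj_on (insert (a n)) ?C"
    by (rule inj_onI) (metis an(1) insert_ident)
  have injb': "inj_on (insert (b n)) ?C"
    by (rule inj_onI) (metis an(2) insert_ident)
  have d1: "?C \<inter> insert (a n) ` ?C = {}" using an by blast
  have d2: "(?C \<union> insert (a n) ` ?C) \<inter> insert (b n) ` ?C = {}" using an ab by blast
  have "(\<Sum>\<tau>\<in>cross a b (Suc n). fterm (Suc n) (card \<tau>))
     = (\<Sum>\<tau>\<in>?C. fterm (Suc n) (card \<tau>)) + (\<Sum>\<tau>\<in>insert (a n) ` ?C. fterm (Suc n) (card \<tau>))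
       + (\<Sum>\<tau>\<in>insert (b n) ` ?C. fterm (Suc n) (card \<tau>))"
    unfolding cross_Suc_eq using fin d1 d2 by (simp add: sum.union_disjoint)
  also have "\<dots> = (\<Sum>\<tau>\<in>?C. fterm (Suc n) (card \<tau>) + fterm (Suc n) (Suc (card \<tau>)) + fterm (Suc n) (Suc (card \<tau>)))"
    unfolding sum.reindex[OF inja'] sum.reindex[OF injb'] o_def sum.distrib
    using an fc by (simp add: card_insert_if)
  also have "\<dots> = (\<Sum>\<tau>\<in>?C. fterm n (card \<tau>) * [:1,1:])"
  proof (rule sum.cong[OF refl])
    fix \<tau> assume "\<tau> \<in> ?C"
    then have c: "card \<tau> \<le> n" using fc by auto
    have e1: "Suc n - card \<tau> = Suc (n - card \<tau>)" using c by simp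
    have e2: "Suc n - Suc (card \<tau>) = n - card \<tau>" by simp
    show "fterm (Suc n) (card \<tau>) + fterm (Suc n) (Suc (card \<tau>)) + fterm (Suc n) (Suc (card \<tau>)) = fterm n (card \<tau>) * [:1,1:]"
      unfolding fterm_def e1 e2 by (simp add: algebra_simps)
  qed
  also have "\<dots> = (\<Sum>\<tau>\<in>?C. fterm n (card \<tau>)) * [:1,1:]" by (rule sum_distrib_right[symmetric])
  also have "\<dots> = [:1,1:] ^ Suc n" using Suc by (simp add: mult.commute)
  finally show ?case .
qed




lemma cm_into_E:
  assumes "\<And>k. continuous_map X euclideanreal (\<lambda>x. f x k)" "\<And>x i. x \<in> topspace X \<Longrightarrow> i \<ge> n \<Longrightarrow> f x i = 0"
  shows "continuous_map X (Euclidean_space n) f"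
  unfolding Euclidean_space_def
  using assms by (auto simp: continuous_map_in_subtopology continuous_map_componentwise_UNIV)

lemma cm_proj_sub: "continuous_map (subtopology (powertop_real UNIV) S) euclideanreal (\<lambda>x. x k)"
  by (rule continuous_map_from_subtopology[OF continuous_map_product_projection]) simp

lemma cm_proj_E: "continuous_map (subtopology (Euclidean_space n) W) euclideanreal (\<lambda>x. x k)"
  unfolding Euclidean_space_def subtopology_subtopology by (rule cm_proj_sub)

lemma cm_ident_real: "continuous_map euclideanreal euclideanreal (\<lambda>x. x)"
  by (simp add: continuous_on_id)

lemma open_in_sphere_empty:
  assumes S: "openin (Euclidean_space 6) S" and sub: "S \<subseteq> topspace (nsphere 5)"
  shows "S = {}"
proof (rule ccontr)
  assume "S \<noteq> {}"
  then obtain p where pS: "p \<in> S" by auto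
  define c where "c = (\<lambda>r::real. \<lambda>i. r * p i)"
  have pE: "p \<in> topspace (Euclidean_space 6)" using pS openin_subset[OF S] by auto
  have cc: "continuous_map euclideanreal (Euclidean_space 6) c"
    unfolding c_def
  proof (rule cm_into_E)
    show "continuous_map euclideanreal euclideanreal (\<lambda>x. x * p k)" for k
      by (rule continuous_map_real_mult_right[OF cm_ident_real])
    show "\<And>x i. 6 \<le> i \<Longrightarrow> x * p i = 0" using pE by (simp add: topspace_Euclidean_space)
  qed
  have "openin euclideanreal {r \<in> topspace euclideanreal. c r \<in> S}"
    by (rule openin_continuous_map_preimage[OF cc S])
  then have op: "open {r. c r \<in> S}" by simp
  have "c 1 \<in> S" unfolding c_def using pS by simp
  then obtain \<epsilon> where e: "\<epsilon> > 0" "ball 1 \<epsilon> \<subseteq> {r. c r \<in> S}"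
    using op by (metis mem_Collect_eq open_contains_ball)
  define r where "r = 1 + \<epsilon>/2"
  have "r \<in> ball 1 \<epsilon>" unfolding r_def using e(1) by (simp add: dist_real_def)
  then have "c r \<in> S" using e by auto
  then have "(\<Sum>i\<le>5. (r * p i)^2) = 1" using sub unfolding c_def by (auto simp: nsphere)
  moreover have "(\<Sum>i\<le>5. (p i)^2) = 1" using pS sub by (auto simp: nsphere)
  moreover have "(\<Sum>i\<le>5. (r * p i)^2) = r^2 * (\<Sum>i\<le>5. (p i)^2)"
    by (simp add: power_mult_distrib sum_distrib_left)
  ultimately have "r^2 * 1 = 1" by simp
  moreover have "r > 1" unfolding r_def using e(1) by simp
  ultimately show False by (simp add: power2_eq_square) (smt (verit) mult_less_cancel_left1)
qed

lemma open_in_hyperplane_empty: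
  assumes S: "openin (Euclidean_space 6) S" and sub: "\<And>x. x \<in> S \<Longrightarrow> x 5 = 0"
  shows "S = {}"
proof (rule ccontr)
  assume "S \<noteq> {}"
  then obtain p where pS: "p \<in> S" by auto
  define c where "c = (\<lambda>r::real. p(5 := r))"
  have pE: "p \<in> topspace (Euclidean_space 6)" using pS openin_subset[OF S] by auto
  have cc: "continuous_map euclideanreal (Euclidean_space 6) c"
    unfolding c_def
  proof (rule cm_into_E)
    show "continuous_map euclideanreal euclideanreal (\<lambda>x. (p(5 := x)) k)" for k
      by (cases "k = 5") (simp_all add: cm_ident_real)
    show "\<And>x i. 6 \<le> i \<Longrightarrow> (p(5 := x)) i = 0" using pE by (simp add: topspace_Euclidean_space)
  qed
  have "openin euclideanreal {r \<in> topspace euclideanreal. c r \<in> S}"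
    by (rule openin_continuous_map_preimage[OF cc S])
  then have op: "open {r. c r \<in> S}" by simp
  have "c 0 \<in> S" unfolding c_def using pS sub[OF pS] by (simp add: fun_upd_idem)
  then obtain \<epsilon> where e: "\<epsilon> > 0" "ball 0 \<epsilon> \<subseteq> {r. c r \<in> S}"
    using op by (metis mem_Collect_eq open_contains_ball)
  have "\<epsilon>/2 \<in> ball 0 \<epsilon>" using e(1) by (simp add: dist_real_def)
  then have "c (\<epsilon>/2) \<in> S" using e(2) by blast
  then have "\<epsilon>/2 = 0" using sub unfolding c_def by fastforce
  then show False using e(1) by simp
qed


lemma cm_proj_E0: "continuous_map (Euclidean_space n) euclideanreal (\<lambda>x. x k)"
  unfolding Euclidean_space_def by (rule cm_proj_sub)

lemma topspace_realization:
  "topspace (realization X) = {x. (\<forall>v. 0 \<le> x v) \<and> {v. x v \<noteq> 0} \<in> X \<and> sum x {v. x v \<noteq> 0} = 1}"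
  unfolding realization_def by simp

lemma cm_nsphere_E: "continuous_map Y (nsphere 5) f \<Longrightarrow> continuous_map Y (Euclidean_space 6) f"
  unfolding nsphere_def by (simp add: continuous_map_in_subtopology)

lemma cm_into_realization:
  assumes "\<And>w. continuous_map Y euclideanreal (\<lambda>y. \<phi> y w)" "\<And>y. y \<in> topspace Y \<Longrightarrow> \<phi> y \<in> topspace (realization X)"
  shows "continuous_map Y (realization X) \<phi>"
  using assms unfolding realization_def
  by (auto simp: continuous_map_in_subtopology continuous_map_componentwise_UNIV)

lemma no_face7:
  assumes hom: "realization X homeomorphic_space nsphere 5" and sX: "\<sigma> \<in> X" and c7: "card \<sigma> = 7"
  shows False
proof -
  obtain f g where fg: "homeomorphic_maps (realization X) (nsphere 5) f g"
    using hom homeomorphic_space_def by blast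
  have fm: "homeomorphic_map (realization X) (nsphere 5) f" using fg homeomorphic_maps_map by blast
  have fc: "continuous_map (realization X) (nsphere 5) f" using fm homeomorphic_imp_continuous_map by blast
  have finS: "finite \<sigma>" using c7 card_ge_0_finite by force
  obtain v where v: "bij_betw v {0..<(7::nat)} \<sigma>" using ex_bij_betw_nat_finite[OF finS] unfolding c7 by blast
  define iv where "iv = inv_into {0..<7} v"
  have iv1: "iv (v i) = i" if "i < 7" for i
    unfolding iv_def using bij_betw_imp_inj_on[OF v] that by (simp add: inv_into_f_f)
  have iv2: "iv w < 7" "v (iv w) = w" if "w \<in> \<sigma>" for w
    unfolding iv_def using v that
    by (auto simp: bij_betw_def inv_into_into f_inv_into_f dest: inv_into_into[of w v "{0..<7}"])
  have vS: "v i \<in> \<sigma>" if "i < 7" for i using v that by (auto simp: bij_betw_def)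
  define bary where "bary = (\<lambda>(y::nat \<Rightarrow> real) i. if i < 6 then y i else 1 - (\<Sum>j<6. y j))"
  define \<phi> where "\<phi> = (\<lambda>y w. if w \<in> \<sigma> then bary y (iv w) else 0)"
  define W where "W = {y \<in> topspace (Euclidean_space 6). \<forall>i<7. 0 < bary y i}"
  have bary_cont: "continuous_map (Euclidean_space 6) euclideanreal (\<lambda>y. bary y i)" for i
  proof (cases "i < 6")
    case True then show ?thesis unfolding bary_def by (simp add: cm_proj_E0)
  next
    case False
    have "continuous_map (Euclidean_space 6) euclideanreal (\<lambda>y. 1 - (\<Sum>j<6. y j))"
      by (intro continuous_map_diff continuous_map_sum cm_proj_E0) simp_all
    then show ?thesis unfolding bary_def using False by simp
  qed
  have Wopen: "openin (Euclidean_space 6) W"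
  proof -
    have "W = (\<Inter>i\<in>{..<7}. {y \<in> topspace (Euclidean_space 6). bary y i \<in> {0<..}})"
    proof -
      have "(0::nat) \<in> {..<7}" by simp
      then show ?thesis unfolding W_def by blast
    qed
    also have "openin (Euclidean_space 6) \<dots>"
    proof (rule openin_INT2)
      show "{..<7::nat} \<noteq> {}" by (metis lessThan_iff emptyE zero_less_numeral)
      show "openin (Euclidean_space 6) {y \<in> topspace (Euclidean_space 6). bary y i \<in> {0<..}}" for i
        by (rule openin_continuous_map_preimage[OF bary_cont]) simp
    qed simp
    finally show ?thesis .
  qed
  have sum_bary: "(\<Sum>i<7. bary y i) = 1" for y
    unfolding bary_def by (simp add: numeral_eq_Suc)
  have phiR: "\<phi> y \<in> topspace (realization X)" if "y \<in> W" for y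
  proof -
    have pos: "\<forall>i<7. 0 < bary y i" using that W_def by auto
    have supp: "{w. \<phi> y w \<noteq> 0} = \<sigma>" unfolding \<phi>_def using pos iv2 by force
    have "sum (\<phi> y) \<sigma> = (\<Sum>i\<in>{0..<7}. \<phi> y (v i))"
      using sum.reindex_bij_betw[OF v, of "\<phi> y"] by simp
    also have "\<dots> = (\<Sum>i<7. bary y i)" unfolding \<phi>_def
      by (rule sum.cong) (auto simp: vS iv1)
    finally have "sum (\<phi> y) \<sigma> = 1" using sum_bary by simp
    moreover have "\<forall>w. 0 \<le> \<phi> y w" unfolding \<phi>_def using pos iv2 by (simp add: less_imp_le)
    ultimately show ?thesis unfolding topspace_realization using supp sX by simp
  qed
  have phic: "continuous_map (subtopology (Euclidean_space 6) W) (realization X) \<phi>"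
  proof (rule cm_into_realization)
    show "continuous_map (subtopology (Euclidean_space 6) W) euclideanreal (\<lambda>y. \<phi> y w)" for w
      unfolding \<phi>_def by (cases "w \<in> \<sigma>") (simp_all add: continuous_map_from_subtopology[OF bary_cont])
    show "\<phi> y \<in> topspace (realization X)" if "y \<in> topspace (subtopology (Euclidean_space 6) W)" for y
      using phiR that by auto
  qed
  have phiinj: "inj_on \<phi> W"
  proof (rule inj_onI)
    fix y y' assume yW: "y \<in> W" "y' \<in> W" and eq: "\<phi> y = \<phi> y'"
    show "y = y'"
    proof
      fix i
      show "y i = y' i"
      proof (cases "i < 6")
        case True
        then have "\<phi> y (v i) = y i" "\<phi> y' (v i) = y' i" unfolding \<phi>_def bary_def by (simp_all add: vS iv1)
        then show ?thesis using eq by simp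
      next
        case False
        then show ?thesis using yW unfolding W_def by (simp add: topspace_Euclidean_space)
      qed
    qed
  qed
  define F where "F = f \<circ> \<phi>"
  have Fc: "continuous_map (subtopology (Euclidean_space 6) W) (Euclidean_space 6) F"
    unfolding F_def by (rule continuous_map_compose[OF phic cm_nsphere_E[OF fc]])
  have Finj: "inj_on F W"
    unfolding F_def using phiR homeomorphic_imp_injective_map[OF fm] phiinj
    by (simp add: comp_inj_on inj_on_subset image_subset_iff inj_on_def)
  have "openin (Euclidean_space 6) (F ` W)"
    by (rule invariance_of_domain_Euclidean_space[OF Wopen Fc Finj])
  moreover have "F ` W \<subseteq> topspace (nsphere 5)"
    unfolding F_def using phiR continuous_map_image_subset_topspace[OF fc] by auto
  ultimately have "F ` W = {}" by (rule open_in_sphere_empty)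
  moreover have "(\<lambda>i. if i < 6 then 1/7 else 0) \<in> W"
    unfolding W_def bary_def by (auto simp: topspace_Euclidean_space)
  ultimately show False by auto
qed


lemma cm_proj_R: "continuous_map (realization X) euclideanreal (\<lambda>x. x w)"
  unfolding realization_def by (rule cm_proj_sub)

lemma no_small_maximal:
  assumes hom: "realization X homeomorphic_space nsphere 5" and rX: "\<rho> \<in> X" and ck: "card \<rho> = Suc k"
    and k4: "k \<le> 4" and maxl: "\<And>\<rho>'. \<rho>' \<in> X \<Longrightarrow> \<rho> \<subseteq> \<rho>' \<Longrightarrow> \<rho>' = \<rho>"
  shows False
proof -
  obtain f g where fg: "homeomorphic_maps (realization X) (nsphere 5) f g"
    using hom homeomorphic_space_def by blast
  have fm: "homeomorphic_map (realization X) (nsphere 5) f" using fg homeomorphic_maps_map by blast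
  note fgd = fg[unfolded homeomorphic_maps_def]
  have fc: "continuous_map (realization X) (nsphere 5) f" using fgd by (elim conjE)
  have gc: "continuous_map (nsphere 5) (realization X) g" using fgd by (elim conjE)
  have gf: "\<And>x. x \<in> topspace (realization X) \<Longrightarrow> g (f x) = x" using fgd by (elim conjE) simp
  have fg': "\<And>y. y \<in> topspace (nsphere 5) \<Longrightarrow> f (g y) = y" using fgd by (elim conjE) simp
  let ?R = "realization X"
  let ?E = "Euclidean_space 6"
  have finR: "finite \<rho>" using ck card_ge_0_finite by force
  obtain v where v: "bij_betw v {0..<Suc k} \<rho>" using ex_bij_betw_nat_finite[OF finR] unfolding ck by blast
  have vS: "v i \<in> \<rho>" if "i < Suc k" for i using v that by (auto simp: bij_betw_def)
  have vsurj: "\<exists>i<Suc k. w = v i" if "w \<in> \<rho>" for w using v that by (auto simp: bij_betw_def)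
  define U where "U = {x \<in> topspace ?R. \<forall>w\<in>\<rho>. 0 < x w}"
  have supp: "{w. x w \<noteq> 0} = \<rho>" if "x \<in> U" for x
  proof -
    have "{w. x w \<noteq> 0} \<in> X" using that unfolding U_def topspace_realization by auto
    moreover have "\<rho> \<subseteq> {w. x w \<noteq> 0}" using that unfolding U_def by force
    ultimately show ?thesis using maxl by blast
  qed
  have sumv: "(\<Sum>i<Suc k. x (v i)) = 1" if "x \<in> U" for x
  proof -
    have "sum x \<rho> = 1" using that supp[OF that] unfolding U_def topspace_realization by auto
    moreover have "sum x \<rho> = (\<Sum>i\<in>{0..<Suc k}. x (v i))" using sum.reindex_bij_betw[OF v, of x] by simp
    ultimately show ?thesis by (simp add: atLeast0LessThan)
  qed
  have Uopen: "openin ?R U"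
  proof -
    have ne: "\<rho> \<noteq> {}" using ck by auto
    have "U = (\<Inter>w\<in>\<rho>. {x \<in> topspace ?R. x w \<in> {0<..}})" unfolding U_def using ne by auto
    also have "openin ?R \<dots>"
    proof (rule openin_INT2)
      show "openin ?R {x \<in> topspace ?R. x w \<in> {0<..}}" for w
        by (rule openin_continuous_map_preimage[OF cm_proj_R]) simp
    qed (use ne finR in auto)
    finally show ?thesis .
  qed
  have fU: "openin (nsphere 5) (f ` U)"
    using homeomorphic_map_openness[OF fm] Uopen openin_subset[OF Uopen] by blast
  define N where "N = (\<lambda>z::nat \<Rightarrow> real. \<Sum>i<6. (z i)^2)"
  define nrm where "nrm = (\<lambda>z i. z i / sqrt (N z))"
  have Nc: "continuous_map (subtopology ?E T) euclideanreal N" for T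
    unfolding N_def by (intro continuous_map_sum continuous_map_real_pow cm_proj_E) simp
  define Ob where "Ob = {z \<in> topspace ?E. N z \<in> {0<..}}"
  have Oopen: "openin ?E Ob"
    unfolding Ob_def using openin_continuous_map_preimage[OF Nc[of "topspace ?E"], of "{0<..}"] by simp
  have nrm1: "continuous_map (subtopology ?E Ob) (powertop_real UNIV) nrm"
    unfolding continuous_map_componentwise_UNIV nrm_def
  proof
    fix i
    show "continuous_map (subtopology ?E Ob) euclideanreal (\<lambda>x. x i / sqrt (N x))"
      by (intro continuous_map_real_divide continuous_map_sqrt Nc cm_proj_E) (auto simp: Ob_def)
  qed
  have nrm2: "nrm z \<in> {x. (\<Sum>i\<le>5. (x i)\<^sup>2) = 1 \<and> (\<forall>i>5. x i = 0)}" if zO: "z \<in> Ob" for z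
  proof -
    have Np: "N z > 0" and zE: "\<forall>i\<ge>6. z i = 0" using zO unfolding Ob_def by (auto simp: topspace_Euclidean_space)
    have "(\<Sum>i\<le>5. (nrm z i)\<^sup>2) = (\<Sum>i<6. (z i)^2 / N z)"
      unfolding nrm_def using Np by (simp add: power_divide lessThan_Suc_atMost[symmetric])
    also have "\<dots> = 1" using Np unfolding N_def by (simp add: sum_divide_distrib[symmetric])
    finally show ?thesis using zE unfolding nrm_def by auto
  qed
  have nrmc: "continuous_map (subtopology ?E Ob) (nsphere 5) nrm"
    unfolding nsphere continuous_map_in_subtopology using nrm1 nrm2 Oopen openin_subset by fastforce
  define C where "C = {z \<in> topspace (subtopology ?E Ob). nrm z \<in> f ` U}"
  have Copen: "openin ?E C"
    using openin_trans_full[OF openin_continuous_map_preimage[OF nrmc fU] Oopen] unfolding C_def .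
  have CO: "C \<subseteq> Ob" unfolding C_def by auto
  have gU: "g (nrm z) \<in> U" "f (g (nrm z)) = nrm z" if zC: "z \<in> C" for z
  proof -
    obtain u where "u \<in> U" "nrm z = f u" using zC unfolding C_def by auto
    moreover have "u \<in> topspace ?R" using \<open>u \<in> U\<close> U_def by auto
    ultimately show "g (nrm z) \<in> U" "f (g (nrm z)) = nrm z" using gf by auto
  qed
  define \<Psi> where "\<Psi> = (\<lambda>z i. if i < k then g (nrm z) (v i) else if i = k then sqrt (N z) else 0)"
  have Psic: "continuous_map (subtopology ?E C) ?E \<Psi>"
    unfolding \<Psi>_def
  proof (rule cm_into_E)
    have sub: "subtopology ?E C = subtopology (subtopology ?E Ob) C"
      using CO by (simp add: subtopology_subtopology Int_absorb1)
    have nc: "continuous_map (subtopology ?E C) (nsphere 5) nrm"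
      unfolding sub by (rule continuous_map_from_subtopology[OF nrmc])
    have gnc: "continuous_map (subtopology ?E C) euclideanreal (\<lambda>z. g (nrm z) w)" for w
      using continuous_map_compose[OF continuous_map_compose[OF nc gc] cm_proj_R[of X w]] by (simp add: o_def)
    show "continuous_map (subtopology ?E C) euclideanreal
        (\<lambda>x. if i < k then g (nrm x) (v i) else if i = k then sqrt (N x) else 0)" for i
      by (cases "i < k"; cases "i = k") (simp_all add: gnc continuous_map_sqrt Nc)
    show "\<And>x i. 6 \<le> i \<Longrightarrow> (if i < k then g (nrm x) (v i) else if i = k then sqrt (N x) else 0) = 0"
      using k4 by auto
  qed
  have Psiinj: "inj_on \<Psi> C"
  proof (rule inj_onI)
    fix z z' assume zC: "z \<in> C" and z'C: "z' \<in> C" and eq: "\<Psi> z = \<Psi> z'"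
    have Nz: "N z > 0" "N z' > 0" using zC z'C CO unfolding Ob_def by auto
    have "sqrt (N z) = sqrt (N z')" using fun_cong[OF eq, of k] unfolding \<Psi>_def by simp
    then have NN: "N z = N z'" by simp
    let ?x = "g (nrm z)" and ?x' = "g (nrm z')"
    have xU: "?x \<in> U" "?x' \<in> U" using gU zC z'C by auto
    have lt: "?x (v i) = ?x' (v i)" if "i < k" for i using fun_cong[OF eq, of i] that unfolding \<Psi>_def by simp
    have "(\<Sum>i<k. ?x (v i)) = (\<Sum>i<k. ?x' (v i))" using lt by simp
    moreover have "(\<Sum>i<k. ?x (v i)) + ?x (v k) = 1" "(\<Sum>i<k. ?x' (v i)) + ?x' (v k) = 1"
      using sumv[OF xU(1)] sumv[OF xU(2)] by simp_all
    ultimately have "?x (v k) = ?x' (v k)" by simp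
    note xk = this
    have le: "?x (v i) = ?x' (v i)" if "i < Suc k" for i
    proof (cases "i < k")
      case True then show ?thesis using lt by simp
    next
      case False then have "i = k" using that by simp
      then show ?thesis using xk by simp
    qed
    have "?x = ?x'"
    proof
      fix w show "?x w = ?x' w"
      proof (cases "w \<in> \<rho>")
        case True then obtain i where "i < Suc k" "w = v i" using vsurj by blast
        then show ?thesis using le by simp
      next
        case False
        then have "w \<notin> {w. ?x w \<noteq> 0}" "w \<notin> {w. ?x' w \<noteq> 0}" unfolding supp[OF xU(1)] supp[OF xU(2)] using False by simp_all
        then show ?thesis by simp
      qed
    qed
    note xx = this
    have "nrm z = f ?x" by (rule gU(2)[OF zC, symmetric])
    also have "\<dots> = f ?x'" by (simp only: xx)
    also have "\<dots> = nrm z'" by (rule gU(2)[OF z'C])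
    finally have "nrm z = nrm z'" .
    show "z = z'"
    proof
      fix i
      have "z i = sqrt (N z) * nrm z i" "z' i = sqrt (N z') * nrm z' i" unfolding nrm_def using Nz by auto
      then show "z i = z' i" using NN \<open>nrm z = nrm z'\<close> by simp
    qed
  qed
  have "openin ?E (\<Psi> ` C)" by (rule invariance_of_domain_Euclidean_space[OF Copen Psic Psiinj])
  moreover have "\<And>y. y \<in> \<Psi> ` C \<Longrightarrow> y 5 = 0" unfolding \<Psi>_def using k4 by auto
  ultimately have "\<Psi> ` C = {}" by (rule open_in_hyperplane_empty)
  moreover have "C \<noteq> {}"
  proof -
    define x0 where "x0 = (\<lambda>w. if w \<in> \<rho> then 1 / real (Suc k) else 0)"
    have sx0: "{w. x0 w \<noteq> 0} = \<rho>" unfolding x0_def by auto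
    have "x0 \<in> topspace ?R" unfolding topspace_realization sx0 using rX ck
      by (simp add: x0_def)
    then have x0U: "x0 \<in> U" unfolding U_def x0_def by auto
    define z0 where "z0 = f x0"
    have z0S: "z0 \<in> topspace (nsphere 5)"
      unfolding z0_def using continuous_map_image_subset_topspace[OF fc] \<open>x0 \<in> topspace ?R\<close> by auto
    then have z0a: "(\<Sum>i\<le>5. (z0 i)^2) = 1" "\<forall>i>5. z0 i = 0" by (auto simp: nsphere)
    have N1: "N z0 = 1" unfolding N_def using z0a(1) by (simp add: lessThan_Suc_atMost[symmetric])
    have "z0 \<in> Ob" unfolding Ob_def using z0a(2) N1 by (auto simp: topspace_Euclidean_space)
    moreover have "nrm z0 = z0" unfolding nrm_def N1 by simp
    moreover have "Ob \<subseteq> topspace ?E" unfolding Ob_def by auto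
    ultimately have "z0 \<in> C" unfolding C_def using x0U unfolding z0_def by auto
    then show ?thesis by auto
  qed
  ultimately show False by simp
qed




lemma Delta_cross:
  assumes inja: "inj_on a {..<4}" and injb: "inj_on b {..<4}" and disj: "a ` {..<4} \<inter> b ` {..<4} = {}"
  shows "Delta 6 (cross a b 4) = Dpoly"
proof -
  have "Delta 6 (cross a b 4) = (\<Sum>\<tau>\<in>cross a b 4. [:0,1:] * fterm 4 (card \<tau>))"
    unfolding Delta_def
  proof (rule sum.cong[OF refl])
    fix \<tau> assume "\<tau> \<in> cross a b 4"
    then have c: "card \<tau> \<le> 4" using cross_sub by blast
    have e1: "6 - (card \<tau> + 1) = Suc (4 - card \<tau>)" using c by simp
    have e2: "6 - (card \<tau> + 2) = 4 - card \<tau>" by simp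
    have m: "Polynomial.monom (1::real) j = [:0,1:] ^ j" for j by (simp add: monom_altdef)
    show "gterm 6 (card \<tau> + 1) + gterm 6 (card \<tau> + 2) = [:0,1:] * fterm 4 (card \<tau>)"
      unfolding gterm_def fterm_def e1 e2 m by (simp add: algebra_simps power_add)
  qed
  also have "\<dots> = [:0,1:] * (\<Sum>\<tau>\<in>cross a b 4. fterm 4 (card \<tau>))" by (simp add: sum_distrib_left)
  also have "\<dots> = [:0,1:] * [:1,1:] ^ 4" using cross_sum[OF inja injb disj, of 4] by simp
  finally show ?thesis unfolding Dpoly_def .
qed

lemma cross_is_4:
  assumes sc: "simplicial_complex X" and hom: "realization X homeomorphic_space nsphere 5"
    and eta: "\<eta> \<in> X" "card \<eta> = 2" and L: "link X \<eta> = cross a b n"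
    and inja: "inj_on a {..<n}"
  shows "n = 4"
proof (rule ccontr)
  assume n4: "n \<noteq> 4"
  have finE: "finite \<eta>" using eta(2) card_ge_0_finite by force
  have cl: "\<And>\<sigma> \<tau>. \<sigma> \<in> X \<Longrightarrow> \<tau> \<subseteq> \<sigma> \<Longrightarrow> \<tau> \<in> X" using sc unfolding simplicial_complex_def by blast
  consider "n \<ge> 5" | "n \<le> 3" using n4 by linarith
  then show False
  proof cases
    case 1
    let ?\<tau> = "a ` {..<5}"
    have tl: "?\<tau> \<in> link X \<eta>" unfolding L using cross_a 1 by blast
    have inj5: "inj_on a {..<5}" by (rule inj_on_subset[OF inja]) (use 1 in auto)
    have ct: "card ?\<tau> = 5" using card_image[OF inj5] by simp
    have "card (\<eta> \<union> ?\<tau>) = 7"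
      using card_Un_disjoint[OF finE, of ?\<tau>] link_disj[OF tl] eta(2) ct by (simp add: Int_commute)
    then show False using no_face7[OF hom link_un[OF tl]] by simp
  next
    case 2
    let ?\<tau> = "a ` {..<n}"
    have tl: "?\<tau> \<in> link X \<eta>" unfolding L using cross_a by blast
    have ct: "card ?\<tau> = n" using card_image[OF inja] by simp
    have cr: "card (\<eta> \<union> ?\<tau>) = Suc (Suc n)"
      using card_Un_disjoint[OF finE, of ?\<tau>] link_disj[OF tl] eta(2) ct by (simp add: Int_commute)
    have maxl: "\<rho>' = \<eta> \<union> ?\<tau>" if "\<rho>' \<in> X" "\<eta> \<union> ?\<tau> \<subseteq> \<rho>'" for \<rho>'
    proof -
      let ?t = "\<rho>' - \<eta>"
      have "?t \<in> X" using cl[OF that(1)] by blast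
      moreover have "\<eta> \<union> ?t = \<rho>'" using that(2) by blast
      ultimately have "?t \<in> link X \<eta>" using that(1) unfolding link_def by auto
      then have tc: "?t \<in> cross a b n" using L by simp
      have "finite ?t" "card ?t \<le> n" using cross_sub[OF tc] by auto
      moreover have "?\<tau> \<subseteq> ?t" using that(2) link_disj[OF tl] by blast
      ultimately have "?\<tau> = ?t" using ct by (metis card_seteq)
      then show ?thesis using that(2) by blast
    qed
    have "Suc n \<le> 4" using 2 by simp
    then show False
      using no_small_maximal[OF hom link_un[OF tl] cr] maxl by blast
  qed
qed


theorem theorem3p3p3:
  fixes X :: "'a set set" and \<eta> :: "'a set"
  assumes "infinite (UNIV :: 'a set)"
    and "triangulates_sphere X 5"
    and "flag X"
    and "\<eta> \<in> X" and "card \<eta> = 2"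
    and "is_cross_polytope (link X \<eta>)"
    and "poly (h_poly 6 X) (-1) < 0"
  shows "\<exists>M. \<forall>m \<ge> M. \<forall>ed e. multi_sub_data X \<eta> m ed e \<longrightarrow>
           (\<exists>z::complex. poly (map_poly complex_of_real (h_poly 6 (sub_iter ed e m X))) z = 0
                          \<and> z \<notin> \<real>)"
proof -
  have sc: "simplicial_complex X" and hom: "realization X homeomorphic_space nsphere 5"
    using assms(2) unfolding triangulates_sphere_def by auto
  obtain n a b where nab: "n \<ge> 1" "inj_on a {..<n}" "inj_on b {..<n}" "a ` {..<n} \<inter> b ` {..<n} = {}"
    "link X \<eta> = cross a b n"
    using assms(6) unfolding is_cross_polytope_def by blast
  have n4: "n = 4" by (rule cross_is_4[OF sc hom assms(4) assms(5) nab(5) nab(2)])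
  have D: "Delta 6 (link X \<eta>) = Dpoly"
    using Delta_cross[of a b] nab n4 by simp
  obtain M where M: "\<forall>m\<ge>M. \<exists>z::complex. poly (map_poly complex_of_real (h_poly 6 X + Polynomial.smult (real m) Dpoly)) z = 0 \<and> z \<notin> \<real>"
    using eventually_nonreal[OF assms(7)] by blast
  show ?thesis
  proof (rule exI[of _ M], intro allI impI)
    fix m ed e assume mM: "M \<le> m" and msd: "multi_sub_data X \<eta> m ed e"
    have "h_poly 6 (sub_iter ed e m X) = h_poly 6 X + Polynomial.smult (real m) (Delta 6 (link X \<eta>))"
      using sub_iter_props[OF sc assms(4) assms(5) msd, of m 6] by simp
    then show "\<exists>z::complex. poly (map_poly complex_of_real (h_poly 6 (sub_iter ed e m X))) z = 0 \<and> z \<notin> \<real>"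
      using M mM D by simp
  qed
qed


end
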